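(* Let $(V,\|\cdot\|,V_+)$ be a normal ordered vector space and let $d=d_V$. Then $d$ is a proper gauge on $V$ (so $(V,d)$ is a gauged space), and the normed ordered vector space induced by $d$ is exactly $(V,\|\cdot\|,V_+)$; that is, $V_+=\{x\in V:\ d(-x)=0\}$ and $\|x\|=\max\{d(x),d(-x)\}$ for all $x\in V$.
   Context: A normed ordered vector space $(V,\|\cdot\|,V_+)$ is a real normed vector space $V$ together with a closed proper cone $V_+$ (i.e. $V_+$ is closed under addition and multiplication by nonnegative scalars, and $V_+\cap(-V_+)=\{0\}$); write $x\le y$ iff $y-x\in V_+$. It is called normal if $x\le y\le z$ implies $\|y\|\le\max\{\|x\|,\|z\|\}$. A gauge on a real vector space $V$ is a map $\nu:V\to[0,\infty)$ with $\nu(x+y)\le\nu(x)+\nu(y)$ and $\nu(tx)=t\nu(x)$ for all $x,y\in V$, $t>0$; its conjugate is $\overline{\nu}(x)=\nu(-x)$. A gauge is proper if for every $x\neq 0$, $\nu(x)\ne 0$ or $\overline{\nu}(x)\neq 0$; a gauged space is a pair $(V,\nu)$ with $\nu$ a proper gauge. The normed ordered vector space induced by a gauge $\nu$ is $(V,\|\cdot\|_\nu,V_{+,\nu})$ with $\|x\|_\nu=\max\{\nu(x),\overline{\nu}(x)\}$ and $V_{+,\nu}=\ker\overline{\nu}=\{x:\nu(-x)=0\}$. For a normed ordered vector space, $d_V(x)=\inf\{\|x+p\|:p\in V_+\}$ (the distance from $x$ to $-V_+$). *)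

theory Defs
  imports "HOL-Analysis.Analysis"
begin

definition closed_proper_cone :: "'a::real_normed_vector set \<Rightarrow> bool" where
  "closed_proper_cone P \<longleftrightarrow>
     closed P \<and> P \<noteq> {} \<and>
     (\<forall>x\<in>P. \<forall>y\<in>P. x + y \<in> P) \<and>
     (\<forall>x\<in>P. \<forall>t::real. t \<ge> 0 \<longrightarrow> t *\<^sub>R x \<in> P) \<and>
     P \<inter> uminus ` P = {0}"

definition cone_le :: "'a::real_normed_vector set \<Rightarrow> 'a \<Rightarrow> 'a \<Rightarrow> bool" where
  "cone_le P x y \<longleftrightarrow> y - x \<in> P"

definition normal_cone :: "'a::real_normed_vector set \<Rightarrow> bool" where
  "normal_cone P \<longleftrightarrow>
     (\<forall>x y z. cone_le P x y \<and> cone_le P y z \<longrightarrow> norm y \<le> max (norm x) (norm z))"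

definition normal_ordered_space :: "'a::real_normed_vector set \<Rightarrow> bool" where
  "normal_ordered_space P \<longleftrightarrow> closed_proper_cone P \<and> normal_cone P"

definition gauge :: "('a::real_vector \<Rightarrow> real) \<Rightarrow> bool" where
  "gauge \<nu> \<longleftrightarrow>
     (\<forall>x. \<nu> x \<ge> 0) \<and>
     (\<forall>x y. \<nu> (x + y) \<le> \<nu> x + \<nu> y) \<and>
     (\<forall>x. \<forall>t::real. t > 0 \<longrightarrow> \<nu> (t *\<^sub>R x) = t * \<nu> x)"

definition conj_gauge :: "('a::real_vector \<Rightarrow> real) \<Rightarrow> 'a \<Rightarrow> real" where
  "conj_gauge \<nu> x = \<nu> (- x)"

definition proper_gauge :: "('a::real_vector \<Rightarrow> real) \<Rightarrow> bool" where
  "proper_gauge \<nu> \<longleftrightarrow> gauge \<nu> \<and>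
     (\<forall>x. x \<noteq> 0 \<longrightarrow> \<nu> x \<noteq> 0 \<or> conj_gauge \<nu> x \<noteq> 0)"

definition gauge_norm :: "('a::real_vector \<Rightarrow> real) \<Rightarrow> 'a \<Rightarrow> real" where
  "gauge_norm \<nu> x = max (\<nu> x) (conj_gauge \<nu> x)"

definition gauge_cone :: "('a::real_vector \<Rightarrow> real) \<Rightarrow> 'a set" where
  "gauge_cone \<nu> = {x. conj_gauge \<nu> x = 0}"

definition dist_neg_cone :: "'a::real_normed_vector set \<Rightarrow> 'a \<Rightarrow> real" where
  "dist_neg_cone P x = Inf ((\<lambda>p. norm (x + p)) ` P)"

end

theory Submission
  imports Defs
begin

lemma dnc_le:
  assumes "p \<in> P" shows "dist_neg_cone P x \<le> norm (x + p)"
  unfolding dist_neg_cone_def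
  by (rule cInf_lower) (use assms in \<open>auto intro: bdd_belowI[where m=0]\<close>)

lemma dnc_ge:
  assumes "P \<noteq> {}" "\<And>p. p \<in> P \<Longrightarrow> c \<le> norm (x + p)"
  shows "c \<le> dist_neg_cone P x"
  unfolding dist_neg_cone_def
  by (rule cInf_greatest) (use assms in auto)

lemma dnc_lt:
  assumes "P \<noteq> {}" "dist_neg_cone P x < c"
  shows "\<exists>p\<in>P. norm (x + p) < c"
  using assms unfolding dist_neg_cone_def
  by (subst (asm) cInf_less_iff) (auto intro: bdd_belowI[where m=0])

theorem proposition2p7:
  fixes P :: "'a::real_normed_vector set"
  assumes "normal_ordered_space P"
  shows "proper_gauge (dist_neg_cone P)
    \<and> gauge_cone (dist_neg_cone P) = P
    \<and> (\<forall>x. gauge_norm (dist_neg_cone P) x = norm x)"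
proof -
  let ?d = "dist_neg_cone P"
  have cl: "closed P" and ne: "P \<noteq> {}" and add: "\<And>x y. x \<in> P \<Longrightarrow> y \<in> P \<Longrightarrow> x + y \<in> P"
    and sc: "\<And>x t. x \<in> P \<Longrightarrow> t \<ge> 0 \<Longrightarrow> t *\<^sub>R x \<in> P"
    and nrm: "\<And>x y z. y - x \<in> P \<Longrightarrow> z - y \<in> P \<Longrightarrow> norm y \<le> max (norm x) (norm z)"
    using assms unfolding normal_ordered_space_def closed_proper_cone_def normal_cone_def cone_le_def
    by blast+
  have zero: "0 \<in> P" using ne sc[of _ 0] by auto
  have nonneg: "\<And>x. ?d x \<ge> 0" by (rule dnc_ge[OF ne]) simp
  have subadd: "\<And>x y. ?d (x + y) \<le> ?d x + ?d y"
  proof -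
    fix x y
    have "?d (x + y) - ?d y \<le> ?d x"
    proof (rule dnc_ge[OF ne])
      fix p assume p: "p \<in> P"
      have "?d (x + y) - norm (x + p) \<le> ?d y"
      proof (rule dnc_ge[OF ne])
        fix q assume q: "q \<in> P"
        have "?d (x + y) \<le> norm (x + y + (p + q))" using dnc_le[OF add[OF p q]] .
        also have "\<dots> \<le> norm (x + p) + norm (y + q)"
          using norm_triangle_ineq[of "x + p" "y + q"] by (simp add: algebra_simps)
        finally show "?d (x + y) - norm (x + p) \<le> norm (y + q)" by simp
      qed
      then show "?d (x + y) - ?d y \<le> norm (x + p)" by simp
    qed
    then show "?d (x + y) \<le> ?d x + ?d y" by simp
  qed
  have hom: "\<And>x t. t > 0 \<Longrightarrow> ?d (t *\<^sub>R x) = t * ?d x"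
  proof -
    fix x and t :: real assume t: "t > 0"
    have "?d (t *\<^sub>R x) / t \<le> ?d x"
    proof (rule dnc_ge[OF ne])
      fix p assume p: "p \<in> P"
      have "?d (t *\<^sub>R x) \<le> norm (t *\<^sub>R x + t *\<^sub>R p)" using dnc_le[OF sc[OF p, of t]] t by simp
      also have "\<dots> = t * norm (x + p)"
        using t by (simp add: scaleR_add_right[symmetric])
      finally show "?d (t *\<^sub>R x) / t \<le> norm (x + p)" using t by (simp add: divide_le_eq mult.commute)
    qed
    moreover have "t * ?d x \<le> ?d (t *\<^sub>R x)"
    proof (rule dnc_ge[OF ne])
      fix p assume p: "p \<in> P"
      have "t * ?d x \<le> t * norm (x + (1/t) *\<^sub>R p)"
        using dnc_le[OF sc[OF p, of "1/t"]] t by simp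
      also have "\<dots> = norm (t *\<^sub>R x + p)"
      proof -
        have "t *\<^sub>R (x + (1/t) *\<^sub>R p) = t *\<^sub>R x + p" using t by (simp add: scaleR_add_right)
        then show ?thesis using t by (metis norm_scaleR abs_of_pos)
      qed
      finally show "t * ?d x \<le> norm (t *\<^sub>R x + p)" .
    qed
    ultimately show "?d (t *\<^sub>R x) = t * ?d x" using t by (simp add: divide_le_eq mult.commute)
  qed
  have nm: "\<And>x. max (?d x) (?d (-x)) = norm x"
  proof -
    fix x :: 'a
    have "?d x \<le> norm x" "?d (-x) \<le> norm x" using dnc_le[OF zero, of x] dnc_le[OF zero, of "-x"] by auto
    moreover have "norm x \<le> max (?d x) (?d (-x))"
    proof (rule ccontr)
      assume "\<not> ?thesis"
      then have a: "?d x < norm x" "?d (-x) < norm x" by auto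
      obtain p where p: "p \<in> P" "norm (x + p) < norm x" using dnc_lt[OF ne a(1)] by blast
      obtain q where q: "q \<in> P" "norm (-x + q) < norm x" using dnc_lt[OF ne a(2)] by blast
      have "norm x \<le> max (norm (x - q)) (norm (x + p))"
        by (rule nrm) (use p q in auto)
      moreover have "norm (x - q) = norm (-x + q)" by (metis minus_diff_eq norm_minus_cancel uminus_add_conv_diff add.commute)
      ultimately show False using p q by auto
    qed
    ultimately show "max (?d x) (?d (-x)) = norm x" by auto
  qed
  have cone: "gauge_cone ?d = P"
  proof
    show "P \<subseteq> gauge_cone ?d"
    proof
      fix x assume x: "x \<in> P"
      have "?d (-x) \<le> 0" using dnc_le[OF x, of "-x"] by simp
      then show "x \<in> gauge_cone ?d" using nonneg[of "-x"] unfolding gauge_cone_def conj_gauge_def by auto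
    qed
  next
    show "gauge_cone ?d \<subseteq> P"
    proof
      fix x assume "x \<in> gauge_cone ?d"
      then have z: "?d (-x) = 0" unfolding gauge_cone_def conj_gauge_def by auto
      have "\<forall>e>0. \<exists>p\<in>P. dist p x < e"
      proof (intro allI impI)
        fix e :: real assume "e > 0"
        then obtain p where "p \<in> P" "norm (-x + p) < e" using dnc_lt[OF ne, of "-x" e] z by auto
        then show "\<exists>p\<in>P. dist p x < e" by (auto simp: dist_norm add.commute)
      qed
      then show "x \<in> P" using cl closed_approachable by blast
    qed
  qed
  have g: "gauge ?d" unfolding gauge_def using nonneg subadd hom by auto
  have pr: "proper_gauge ?d"
    unfolding proper_gauge_def conj_gauge_def
  proof (intro conjI g allI impI)
    fix x :: 'a assume "x \<noteq> 0"
    then have "max (?d x) (?d (-x)) > 0" using nm[of x] by simp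
    then show "?d x \<noteq> 0 \<or> ?d (-x) \<noteq> 0" by (auto simp: max_def split: if_splits)
  qed
  show ?thesis using pr cone nm unfolding gauge_norm_def conj_gauge_def by auto
qed

end
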